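(* Let $\dot G\in\mathcal C_1\cup\mathcal C_4\cup\mathcal C_5$ be a connected, non-complete, $5$-regular and $1$ net-regular SRSG with parameters $(n,5,a,b,c)$. If $(a,b)=(2,0)$, then $4\mid n$.
   Context: A signed graph $\dot G=(G,\sigma)$ is a simple graph $G$ with $\sigma:E(G)\to\{\pm1\}$; adjacency matrix $A_{\dot G}$ has entries $\sigma(v_iv_j)$ for adjacent vertices and $0$ otherwise. Degree and connectedness refer to $G$; net-degree is $d^+(v)-d^-(v)$; $\rho$ net-regular means all net-degrees equal $\rho$. $\dot G$ on $n$ vertices is an SRSG if it is neither homogeneous complete nor edgeless and there are $r\in\mathbb N$, $a,b,c\in\mathbb Z$ with $(A^2_{\dot G})_{ii}=r$, $(A^2_{\dot G})_{ij}=a$ for positive edges, $b$ for negative edges, $c$ for distinct non-adjacent pairs; parameters $(n,r,a,b,c)$. Classes: $\mathcal C_1$: $a=-b$ and (complete, or non-complete with $c\neq0$); $\mathcal C_4$: $a\ne-b$, non-complete, $c=0$; $\mathcal C_5$: $a\neq-b$, non-complete, $c\notin\{0,\frac{a+b}{2}\}$. *)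

theory Defs
  imports Main
begin

definition signed_graph :: "'a set \<Rightarrow> ('a \<Rightarrow> 'a \<Rightarrow> bool) \<Rightarrow> ('a \<Rightarrow> 'a \<Rightarrow> int) \<Rightarrow> bool" where
  "signed_graph V E \<sigma> \<longleftrightarrow> finite V
     \<and> (\<forall>u v. E u v \<longrightarrow> u \<in> V \<and> v \<in> V)
     \<and> (\<forall>u v. E u v \<longrightarrow> E v u)
     \<and> (\<forall>v. \<not> E v v)
     \<and> (\<forall>u v. E u v \<longrightarrow> \<sigma> u v = \<sigma> v u \<and> (\<sigma> u v = 1 \<or> \<sigma> u v = -1))"

definition sadj :: "('a \<Rightarrow> 'a \<Rightarrow> bool) \<Rightarrow> ('a \<Rightarrow> 'a \<Rightarrow> int) \<Rightarrow> 'a \<Rightarrow> 'a \<Rightarrow> int" where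
  "sadj E \<sigma> u v = (if E u v then \<sigma> u v else 0)"

definition sadj2 :: "'a set \<Rightarrow> ('a \<Rightarrow> 'a \<Rightarrow> bool) \<Rightarrow> ('a \<Rightarrow> 'a \<Rightarrow> int) \<Rightarrow> 'a \<Rightarrow> 'a \<Rightarrow> int" where
  "sadj2 V E \<sigma> u v = (\<Sum>w\<in>V. sadj E \<sigma> u w * sadj E \<sigma> w v)"

definition degree :: "'a set \<Rightarrow> ('a \<Rightarrow> 'a \<Rightarrow> bool) \<Rightarrow> 'a \<Rightarrow> nat" where
  "degree V E v = card {w\<in>V. E v w}"

definition net_degree :: "'a set \<Rightarrow> ('a \<Rightarrow> 'a \<Rightarrow> bool) \<Rightarrow> ('a \<Rightarrow> 'a \<Rightarrow> int) \<Rightarrow> 'a \<Rightarrow> int" where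
  "net_degree V E \<sigma> v = int (card {w\<in>V. E v w \<and> \<sigma> v w = 1}) - int (card {w\<in>V. E v w \<and> \<sigma> v w = -1})"

definition regular :: "'a set \<Rightarrow> ('a \<Rightarrow> 'a \<Rightarrow> bool) \<Rightarrow> nat \<Rightarrow> bool" where
  "regular V E k \<longleftrightarrow> (\<forall>v\<in>V. degree V E v = k)"

definition net_regular :: "'a set \<Rightarrow> ('a \<Rightarrow> 'a \<Rightarrow> bool) \<Rightarrow> ('a \<Rightarrow> 'a \<Rightarrow> int) \<Rightarrow> int \<Rightarrow> bool" where
  "net_regular V E \<sigma> \<rho> \<longleftrightarrow> (\<forall>v\<in>V. net_degree V E \<sigma> v = \<rho>)"

definition complete_graph :: "'a set \<Rightarrow> ('a \<Rightarrow> 'a \<Rightarrow> bool) \<Rightarrow> bool" where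
  "complete_graph V E \<longleftrightarrow> (\<forall>u\<in>V. \<forall>v\<in>V. u \<noteq> v \<longrightarrow> E u v)"

definition edgeless :: "('a \<Rightarrow> 'a \<Rightarrow> bool) \<Rightarrow> bool" where
  "edgeless E \<longleftrightarrow> (\<forall>u v. \<not> E u v)"

definition homogeneous :: "('a \<Rightarrow> 'a \<Rightarrow> bool) \<Rightarrow> ('a \<Rightarrow> 'a \<Rightarrow> int) \<Rightarrow> bool" where
  "homogeneous E \<sigma> \<longleftrightarrow> (\<forall>u v x y. E u v \<and> E x y \<longrightarrow> \<sigma> u v = \<sigma> x y)"

definition connected_graph :: "'a set \<Rightarrow> ('a \<Rightarrow> 'a \<Rightarrow> bool) \<Rightarrow> bool" where
  "connected_graph V E \<longleftrightarrow> V \<noteq> {} \<and> (\<forall>u\<in>V. \<forall>v\<in>V. E\<^sup>*\<^sup>* u v)"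

definition SRSG :: "'a set \<Rightarrow> ('a \<Rightarrow> 'a \<Rightarrow> bool) \<Rightarrow> ('a \<Rightarrow> 'a \<Rightarrow> int) \<Rightarrow>
    nat \<Rightarrow> nat \<Rightarrow> int \<Rightarrow> int \<Rightarrow> int \<Rightarrow> bool" where
  "SRSG V E \<sigma> n r a b c \<longleftrightarrow> signed_graph V E \<sigma> \<and> n = card V
     \<and> \<not> (complete_graph V E \<and> homogeneous E \<sigma>) \<and> \<not> edgeless E
     \<and> (\<forall>v\<in>V. sadj2 V E \<sigma> v v = int r)
     \<and> (\<forall>u v. E u v \<and> \<sigma> u v = 1 \<longrightarrow> sadj2 V E \<sigma> u v = a)
     \<and> (\<forall>u v. E u v \<and> \<sigma> u v = -1 \<longrightarrow> sadj2 V E \<sigma> u v = b)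
     \<and> (\<forall>u\<in>V. \<forall>v\<in>V. u \<noteq> v \<and> \<not> E u v \<longrightarrow> sadj2 V E \<sigma> u v = c)"

definition class_C1 :: "'a set \<Rightarrow> ('a \<Rightarrow> 'a \<Rightarrow> bool) \<Rightarrow> int \<Rightarrow> int \<Rightarrow> int \<Rightarrow> bool" where
  "class_C1 V E a b c \<longleftrightarrow> a = - b \<and> (complete_graph V E \<or> (\<not> complete_graph V E \<and> c \<noteq> 0))"

definition class_C4 :: "'a set \<Rightarrow> ('a \<Rightarrow> 'a \<Rightarrow> bool) \<Rightarrow> int \<Rightarrow> int \<Rightarrow> int \<Rightarrow> bool" where
  "class_C4 V E a b c \<longleftrightarrow> a \<noteq> - b \<and> \<not> complete_graph V E \<and> c = 0"

text \<open>c \<notin> {0, (a+b)/2}; the second condition is written as 2c \<noteq> a + b.\<close>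
definition class_C5 :: "'a set \<Rightarrow> ('a \<Rightarrow> 'a \<Rightarrow> bool) \<Rightarrow> int \<Rightarrow> int \<Rightarrow> int \<Rightarrow> bool" where
  "class_C5 V E a b c \<longleftrightarrow> a \<noteq> - b \<and> \<not> complete_graph V E \<and> c \<noteq> 0 \<and> 2 * c \<noteq> a + b"

end

theory Submission
  imports Defs
begin

lemma inv_even:
  fixes S :: "'b set"
  shows "finite S \<Longrightarrow> (\<forall>x\<in>S. f x \<in> S \<and> f x \<noteq> x \<and> f (f x) = x) \<Longrightarrow> even (card S)"
proof (induction "card S" arbitrary: S rule: less_induct)
  case less
  show ?case
  proof (cases "S = {}")
    case True then show ?thesis by simp
  next
    case False
    then obtain x where x: "x \<in> S" by blast
    define S' where "S' = S - {x, f x}"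
    have fx: "f x \<in> S" "f x \<noteq> x" using less.prems x by auto
    have c: "card S = card S' + 2"
    proof -
      have "{x, f x} \<subseteq> S" using x fx by auto
      then have "card S' = card S - card {x, f x}" unfolding S'_def
        using less.prems(1) by (simp add: card_Diff_subset finite_subset)
      moreover have "card {x, f x} = 2" using fx by auto
      moreover have "card {x, f x} \<le> card S" using \<open>{x, f x} \<subseteq> S\<close> less.prems(1) card_mono by blast
      ultimately show ?thesis by linarith
    qed
    have "even (card S')"
    proof (rule less.hyps)
      show "card S' < card S" using c by simp
      show "finite S'" using less.prems(1) S'_def by simp
      show "\<forall>y\<in>S'. f y \<in> S' \<and> f y \<noteq> y \<and> f (f y) = y"
      proof
        fix y assume y: "y \<in> S'"
        then have yS: "y \<in> S" "y \<noteq> x" "y \<noteq> f x" unfolding S'_def by auto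
        have h: "f y \<in> S" "f y \<noteq> y" "f (f y) = y" using less.prems(2) yS(1) by auto
        have "f y \<noteq> x" using yS(3) h(3) by metis
        moreover have "f y \<noteq> f x" using yS(2) h(3) less.prems(2) x by metis
        ultimately show "f y \<in> S' \<and> f y \<noteq> y \<and> f (f y) = y" using h unfolding S'_def by auto
      qed
    qed
    then show ?thesis using c by simp
  qed
qed

theorem lemma3p6:
  fixes V :: "'a set" and E :: "'a \<Rightarrow> 'a \<Rightarrow> bool" and \<sigma> :: "'a \<Rightarrow> 'a \<Rightarrow> int"
    and n :: nat and a b c :: int
  assumes "SRSG V E \<sigma> n 5 a b c"
    and "class_C1 V E a b c \<or> class_C4 V E a b c \<or> class_C5 V E a b c"
    and "connected_graph V E"
    and "\<not> complete_graph V E"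
    and "regular V E 5"
    and "net_regular V E \<sigma> 1"
    and "(a, b) = (2, 0)"
  shows "4 dvd n"
proof -
  have sg: "signed_graph V E \<sigma>" and nV: "n = card V"
    and diag: "\<forall>v\<in>V. sadj2 V E \<sigma> v v = 5"
    and pos: "\<forall>u v. E u v \<and> \<sigma> u v = 1 \<longrightarrow> sadj2 V E \<sigma> u v = a"
    and neg: "\<forall>u v. E u v \<and> \<sigma> u v = -1 \<longrightarrow> sadj2 V E \<sigma> u v = b"
    and non: "\<forall>u\<in>V. \<forall>v\<in>V. u \<noteq> v \<and> \<not> E u v \<longrightarrow> sadj2 V E \<sigma> u v = c"
    using assms(1) unfolding SRSG_def by auto
  have fin: "finite V" and inV: "\<And>u v. E u v \<Longrightarrow> u \<in> V \<and> v \<in> V"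
    and sym: "\<And>u v. E u v \<Longrightarrow> E v u" and irr: "\<And>v. \<not> E v v"
    and sgn: "\<And>u v. E u v \<Longrightarrow> \<sigma> u v = \<sigma> v u \<and> (\<sigma> u v = 1 \<or> \<sigma> u v = -1)"
    using sg unfolding signed_graph_def by auto
  have ab: "a = 2" "b = 0" using assms(7) by auto
  have deg: "\<And>v. v \<in> V \<Longrightarrow> card {w\<in>V. E v w} = 5"
    using assms(5) unfolding regular_def degree_def by auto
  have nd: "\<And>v. v \<in> V \<Longrightarrow> int (card {w\<in>V. E v w \<and> \<sigma> v w = 1}) - int (card {w\<in>V. E v w \<and> \<sigma> v w = -1}) = 1"
    using assms(6) unfolding net_regular_def net_degree_def by auto
  have split: "\<And>v. {w\<in>V. E v w} = {w\<in>V. E v w \<and> \<sigma> v w = 1} \<union> {w\<in>V. E v w \<and> \<sigma> v w = -1}"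
    using sgn by auto
  have cardPM: "\<And>v. v \<in> V \<Longrightarrow> card {w\<in>V. E v w \<and> \<sigma> v w = 1} + card {w\<in>V. E v w \<and> \<sigma> v w = -1} = 5"
  proof -
    fix v assume v: "v \<in> V"
    have "card ({w\<in>V. E v w \<and> \<sigma> v w = 1} \<union> {w\<in>V. E v w \<and> \<sigma> v w = -1})
        = card {w\<in>V. E v w \<and> \<sigma> v w = 1} + card {w\<in>V. E v w \<and> \<sigma> v w = -1}"
      by (rule card_Un_disjoint) (use fin in auto)
    then show "?thesis v" using deg[OF v] split[of v] by simp
  qed
  have cardP: "\<And>v. v \<in> V \<Longrightarrow> card {w\<in>V. E v w \<and> \<sigma> v w = 1} = 3"
    using cardPM nd by fastforce
  have rowA: "\<And>x. x \<in> V \<Longrightarrow> (\<Sum>w\<in>V. sadj E \<sigma> x w) = 1"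
  proof -
    fix x assume x: "x \<in> V"
    let ?P = "{w\<in>V. E x w \<and> \<sigma> x w = 1}" and ?M = "{w\<in>V. E x w \<and> \<sigma> x w = -1}"
    have "(\<Sum>w\<in>V. sadj E \<sigma> x w) = (\<Sum>w\<in>?P \<union> ?M. sadj E \<sigma> x w)"
      by (rule sum.mono_neutral_right) (use fin sgn in \<open>auto simp: sadj_def\<close>)
    also have "\<dots> = (\<Sum>w\<in>?P. sadj E \<sigma> x w) + (\<Sum>w\<in>?M. sadj E \<sigma> x w)"
      by (rule sum.union_disjoint) (use fin in auto)
    also have "(\<Sum>w\<in>?P. sadj E \<sigma> x w) = (\<Sum>w\<in>?P. 1)"
      by (rule sum.cong) (auto simp: sadj_def)
    also have "(\<Sum>w\<in>?M. sadj E \<sigma> x w) = (\<Sum>w\<in>?M. -1)"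
      by (rule sum.cong) (auto simp: sadj_def)
    finally show "(\<Sum>w\<in>V. sadj E \<sigma> x w) = 1" using nd[OF x] by simp
  qed
  have rowA2: "\<And>v. v \<in> V \<Longrightarrow> (\<Sum>w\<in>V. sadj2 V E \<sigma> v w) = 1"
  proof -
    fix v assume v: "v \<in> V"
    have "(\<Sum>w\<in>V. sadj2 V E \<sigma> v w) = (\<Sum>x\<in>V. \<Sum>w\<in>V. sadj E \<sigma> v x * sadj E \<sigma> x w)"
      unfolding sadj2_def by (rule sum.swap)
    also have "\<dots> = (\<Sum>x\<in>V. sadj E \<sigma> v x * (\<Sum>w\<in>V. sadj E \<sigma> x w))"
      by (simp add: sum_distrib_left)
    also have "\<dots> = (\<Sum>x\<in>V. sadj E \<sigma> v x)"
      by (rule sum.cong) (auto simp: rowA)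
    also have "\<dots> = 1" by (rule rowA[OF v])
    finally show "?thesis v" .
  qed
  obtain v where v: "v \<in> V" using assms(3) unfolding connected_graph_def by auto
  define P where "P = {w\<in>V. E v w \<and> \<sigma> v w = 1}"
  define M where "M = {w\<in>V. E v w \<and> \<sigma> v w = -1}"
  define N where "N = {w\<in>V. w \<noteq> v \<and> \<not> E v w}"
  have Vs: "V = {v} \<union> (P \<union> M) \<union> N" using v sgn unfolding P_def M_def N_def by auto
  have cPM: "card (P \<union> M) = 5" using deg[OF v] split[of v] unfolding P_def M_def by simp
  have cV: "card V = 1 + card (P \<union> M) + card N"
  proof -
    have "card V = card ({v} \<union> (P \<union> M)) + card N"
      by (subst Vs, rule card_Un_disjoint) (use fin irr in \<open>auto simp: P_def M_def N_def\<close>)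
    also have "card ({v} \<union> (P \<union> M)) = 1 + card (P \<union> M)"
      by (subst card_Un_disjoint) (use fin irr in \<open>auto simp: P_def M_def\<close>)
    finally show ?thesis .
  qed
  have "(\<Sum>w\<in>V. sadj2 V E \<sigma> v w) = sadj2 V E \<sigma> v v + (\<Sum>w\<in>P. sadj2 V E \<sigma> v w)
        + (\<Sum>w\<in>M. sadj2 V E \<sigma> v w) + (\<Sum>w\<in>N. sadj2 V E \<sigma> v w)"
  proof -
    have "(\<Sum>w\<in>V. sadj2 V E \<sigma> v w) = (\<Sum>w\<in>{v} \<union> (P \<union> M). sadj2 V E \<sigma> v w) + (\<Sum>w\<in>N. sadj2 V E \<sigma> v w)"
      by (subst Vs, rule sum.union_disjoint) (use fin irr in \<open>auto simp: P_def M_def N_def\<close>)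
    also have "(\<Sum>w\<in>{v} \<union> (P \<union> M). sadj2 V E \<sigma> v w) = sadj2 V E \<sigma> v v + (\<Sum>w\<in>P \<union> M. sadj2 V E \<sigma> v w)"
      by (subst sum.union_disjoint) (use fin irr in \<open>auto simp: P_def M_def\<close>)
    also have "(\<Sum>w\<in>P \<union> M. sadj2 V E \<sigma> v w) = (\<Sum>w\<in>P. sadj2 V E \<sigma> v w) + (\<Sum>w\<in>M. sadj2 V E \<sigma> v w)"
      by (rule sum.union_disjoint) (use fin in \<open>auto simp: P_def M_def\<close>)
    finally show ?thesis by simp
  qed
  also have "(\<Sum>w\<in>P. sadj2 V E \<sigma> v w) = (\<Sum>w\<in>P. 2)"
    by (rule sum.cong) (use pos ab in \<open>auto simp: P_def\<close>)
  also have "(\<Sum>w\<in>M. sadj2 V E \<sigma> v w) = (\<Sum>w\<in>M. 0)"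
    by (rule sum.cong) (use neg ab in \<open>auto simp: M_def\<close>)
  also have "(\<Sum>w\<in>N. sadj2 V E \<sigma> v w) = (\<Sum>w\<in>N. c)"
    by (rule sum.cong) (use non v in \<open>auto simp: N_def\<close>)
  finally have eq: "1 = 5 + 2 * int (card P) + c * int (card N)"
    using rowA2[OF v] diag v by (simp add: algebra_simps)
  have "card P = 3" using cardP[OF v] unfolding P_def .
  with eq have ck: "c * int (card N) = -10" by simp
  have nN: "n = 6 + card N" using cV cPM nV by simp
  define S where "S = Sigma V (\<lambda>u. {w\<in>V. E u w})"
  have "card S = (\<Sum>u\<in>V. card {w\<in>V. E u w})"
    unfolding S_def by (rule card_SigmaI) (use fin in auto)
  also have "\<dots> = (\<Sum>u\<in>V. 5)" by (rule sum.cong) (auto simp: deg)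
  finally have cS: "card S = 5 * n" using nV by simp
  have "even (card S)"
    by (rule inv_even[where f = "\<lambda>(x, y). (y, x)"]) (use fin sym in \<open>auto simp: S_def irr\<close>)
  then have evn: "even n" using cS by simp
  define k where "k = card N"
  have kd: "k dvd 10"
  proof -
    have "int k dvd 10" using ck unfolding k_def by (metis dvd_minus_iff dvd_triv_right mult.commute)
    then show ?thesis by presburger
  qed
  then have "k \<le> 10" by (simp add: dvd_imp_le)
  then have "k \<in> {0,1,2,3,4,5,6,7,8,9,10}" by (simp add: le_Suc_eq numeral_eq_Suc)
  moreover have "even k" using evn nN k_def by simp
  ultimately have "k = 2 \<or> k = 10" using kd by auto
  then show ?thesis using nN k_def by auto
qed

end
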